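(* Let $G$ be a finite group and $H$ a subgroup such that $\mathcal{O}_G(H)$ is Boolean, and let $A$ be an atom of $\mathcal{O}_G(H)$ with lattice complement $A^{\complement}$. If $K_1,K_2\in\mathcal{O}_{A^{\complement}}(H)$ with $K_1<K_2$, then $|K_1\vee A:K_1|\le|K_2\vee A:K_2|$. Equivalently, if $K_1,K_2\in\mathcal{O}_G(A)$ with $K_1<K_2$, then $|K_1:K_1\wedge A^{\complement}|\le|K_2:K_2\wedge A^{\complement}|$. Moreover, if $|G:A^{\complement}|=2$ then $|K\vee A:K|=2$ for all $K\in\mathcal{O}_{A^{\complement}}(H)$.
   Context: $\mathcal{O}_X(Y)=\{K\mid Y\le K\le X\}$, with $\vee$ the subgroup generated and $\wedge$ the intersection. Boolean means isomorphic to the lattice of subsets of a finite set. The lattice complement $K^{\complement}$ of $K\in\mathcal{O}_G(H)$ is the unique element with $K\wedge K^{\complement}=H$ and $K\vee K^{\complement}=G$. An atom is a minimal element of $\mathcal{O}_G(H)\setminus\{H\}$. *)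

theory Defs
  imports "HOL-Algebra.Algebra"
begin

definition ovl :: "('a, 'b) monoid_scheme \<Rightarrow> 'a set \<Rightarrow> 'a set \<Rightarrow> 'a set set" where
  "ovl M U V = {K. subgroup K M \<and> V \<subseteq> K \<and> K \<subseteq> U}"

definition sjoin :: "('a, 'b) monoid_scheme \<Rightarrow> 'a set \<Rightarrow> 'a set \<Rightarrow> 'a set" where
  "sjoin M K L = generate M (K \<union> L)"

definition sindex :: "('a, 'b) monoid_scheme \<Rightarrow> 'a set \<Rightarrow> 'a set \<Rightarrow> nat" where
  "sindex M L K = card (rcosets\<^bsub>M\<lparr>carrier := L\<rparr>\<^esub> K)"

text \<open>O_G(H) is Boolean: order-isomorphic (hence lattice-isomorphic) to the
  power set of a finite set (w.l.o.g. a finite set of naturals).\<close>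
definition boolean_ovl :: "('a, 'b) monoid_scheme \<Rightarrow> 'a set \<Rightarrow> bool" where
  "boolean_ovl M H \<longleftrightarrow> (\<exists>S :: nat set. \<exists>f. finite S \<and> bij_betw f (ovl M (carrier M) H) (Pow S) \<and>
      (\<forall>K\<in>ovl M (carrier M) H. \<forall>L\<in>ovl M (carrier M) H. K \<subseteq> L \<longleftrightarrow> f K \<subseteq> f L))"

definition atom_ovl :: "('a, 'b) monoid_scheme \<Rightarrow> 'a set \<Rightarrow> 'a set \<Rightarrow> bool" where
  "atom_ovl M H A \<longleftrightarrow> A \<in> ovl M (carrier M) H \<and> A \<noteq> H \<and>
     (\<forall>K\<in>ovl M (carrier M) H. K \<noteq> H \<longrightarrow> K \<subseteq> A \<longrightarrow> K = A)"

end

theory Submission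
  imports Defs
begin

lemma sindex_eq: "sindex G L K = card ((\<lambda>x. K #>\<^bsub>G\<^esub> x) ` L)"
proof -
  have "RCOSETS (G\<lparr>carrier := L\<rparr>) K = (\<lambda>x. K #>\<^bsub>G\<^esub> x) ` L"
    unfolding RCOSETS_def r_coset_def by auto
  then show ?thesis unfolding sindex_def by simp
qed

lemma card_image_factor:
  assumes "finite B" "A \<subseteq> B" "\<And>x y. x \<in> A \<Longrightarrow> y \<in> A \<Longrightarrow> g x = g y \<Longrightarrow> f x = f y"
  shows "card (f ` A) \<le> card (g ` B)"
proof -
  have "f ` A = (\<lambda>c. f (inv_into A g c)) ` (g ` A)"
  proof (intro equalityI subsetI)
    fix z assume "z \<in> f ` A"
    then obtain x where x: "x \<in> A" "z = f x" by blast
    have "inv_into A g (g x) \<in> A" "g (inv_into A g (g x)) = g x"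
      using x by (auto intro: inv_into_into f_inv_into_f)
    then have "f (inv_into A g (g x)) = f x" using assms(3) x by blast
    then show "z \<in> (\<lambda>c. f (inv_into A g c)) ` (g ` A)" using x by force
  next
    fix z assume "z \<in> (\<lambda>c. f (inv_into A g c)) ` (g ` A)"
    then obtain x where x: "x \<in> A" "z = f (inv_into A g (g x))" by blast
    then show "z \<in> f ` A" by (auto intro: inv_into_into)
  qed
  then have "card (f ` A) \<le> card (g ` A)" by (metis card_image_le finite_imageI finite_subset assms(1,2))
  also have "\<dots> \<le> card (g ` B)" using assms by (intro card_mono) auto
  finally show ?thesis .
qed

lemma (in group) rcos_eqD:
  assumes "subgroup K G" "x \<in> carrier G" "y \<in> carrier G" "K #> x = K #> y"
  shows "x \<otimes> inv y \<in> K"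
proof -
  have "x \<in> K #> y" using rcos_self[OF assms(2,1)] assms(4) by simp
  then obtain k where k: "k \<in> K" "x = k \<otimes> y" unfolding r_coset_def by blast
  have kc: "k \<in> carrier G" using k(1) subgroup.mem_carrier[OF assms(1)] by blast
  have "x \<otimes> inv y = k \<otimes> (y \<otimes> inv y)" using k(2) kc assms(3) by (simp add: m_assoc)
  also have "\<dots> = k" using kc assms(3) by simp
  finally show ?thesis using k by simp
qed

lemma (in group) rcos_eqI:
  assumes "subgroup K G" "x \<in> carrier G" "y \<in> carrier G" "x \<otimes> inv y \<in> K"
  shows "K #> x = K #> y"
proof -
  have "(x \<otimes> inv y) \<otimes> y = x \<otimes> (inv y \<otimes> y)" using assms(2,3) by (simp add: m_assoc)
  also have "\<dots> = x" using assms(2,3) by simp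
  finally have "x = (x \<otimes> inv y) \<otimes> y" by simp
  then have "x \<in> K #> y" using assms(4) unfolding r_coset_def by blast
  then show ?thesis using repr_independence[OF _ assms(3,1)] by simp
qed

lemma (in group) index_mono:
  assumes "subgroup K1 G" "subgroup K2 G" "subgroup L1 G" "L1 \<subseteq> L2" "L2 \<subseteq> carrier G"
    "finite (carrier G)" "K2 \<inter> L1 \<subseteq> K1"
  shows "sindex G L1 K1 \<le> sindex G L2 K2"
  unfolding sindex_eq
proof (rule card_image_factor)
  show "finite L2" using finite_subset[OF assms(5,6)] .
  show "L1 \<subseteq> L2" by fact
  fix x y assume xy: "x \<in> L1" "y \<in> L1" "K2 #> x = K2 #> y"
  have c: "x \<in> carrier G" "y \<in> carrier G"
    using xy(1,2) subgroup.mem_carrier[OF assms(3)] by auto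
  have "x \<otimes> inv y \<in> K2" using rcos_eqD[OF assms(2) c xy(3)] .
  moreover have "inv y \<in> L1" using subgroup.m_inv_closed[OF assms(3) xy(2)] .
  then have "x \<otimes> inv y \<in> L1" using subgroup.m_closed[OF assms(3) xy(1)] by blast
  ultimately have "x \<otimes> inv y \<in> K1" using assms(7) by blast
  then show "K1 #> x = K1 #> y" using rcos_eqI[OF assms(1) c] by blast
qed

lemma (in group) sjoin_ovl:
  assumes "K \<in> ovl G (carrier G) H" "L \<in> ovl G (carrier G) H"
  shows "sjoin G K L \<in> ovl G (carrier G) H"
    "K \<subseteq> sjoin G K L" "L \<subseteq> sjoin G K L"
    "\<And>M. subgroup M G \<Longrightarrow> K \<subseteq> M \<Longrightarrow> L \<subseteq> M \<Longrightarrow> sjoin G K L \<subseteq> M"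
proof -
  have sK: "subgroup K G" "H \<subseteq> K" using assms(1) unfolding ovl_def by auto
  have sL: "subgroup L G" using assms(2) unfolding ovl_def by auto
  have s: "K \<union> L \<subseteq> carrier G" using subgroup.subset[OF sK(1)] subgroup.subset[OF sL] by blast
  have i: "K \<union> L \<subseteq> sjoin G K L" unfolding sjoin_def using generate.incl[of _ "K \<union> L" G] by blast
  then show "K \<subseteq> sjoin G K L" "L \<subseteq> sjoin G K L" by auto
  show "sjoin G K L \<in> ovl G (carrier G) H" unfolding ovl_def sjoin_def
    using generate_is_subgroup[OF s] generate_incl[OF s] i sK(2) unfolding sjoin_def by auto
  show "\<And>M. subgroup M G \<Longrightarrow> K \<subseteq> M \<Longrightarrow> L \<subseteq> M \<Longrightarrow> sjoin G K L \<subseteq> M"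
    unfolding sjoin_def using generate_subgroup_incl by (metis Un_least)
qed

theorem lemma10p6:
  fixes G :: "('a, 'b) monoid_scheme" and H A Ac :: "'a set"
  assumes "group G" and "finite (carrier G)" and "subgroup H G"
    and "boolean_ovl G H"
    and "atom_ovl G H A"
    and "Ac \<in> ovl G (carrier G) H" and "A \<inter> Ac = H" and "sjoin G A Ac = carrier G"
  shows "(\<forall>K1\<in>ovl G Ac H. \<forall>K2\<in>ovl G Ac H. K1 \<subset> K2 \<longrightarrow>
            sindex G (sjoin G K1 A) K1 \<le> sindex G (sjoin G K2 A) K2)
      \<and> (\<forall>K1\<in>ovl G (carrier G) A. \<forall>K2\<in>ovl G (carrier G) A. K1 \<subset> K2 \<longrightarrow>
            sindex G K1 (K1 \<inter> Ac) \<le> sindex G K2 (K2 \<inter> Ac))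
      \<and> (sindex G (carrier G) Ac = 2 \<longrightarrow>
            (\<forall>K\<in>ovl G Ac H. sindex G (sjoin G K A) K = 2))"
proof -
  interpret group G by fact
  define Ov where "Ov = ovl G (carrier G) H"
  obtain S :: "nat set" and f where f0: "bij_betw f Ov (Pow S)"
    "\<forall>K\<in>Ov. \<forall>L\<in>Ov. K \<subseteq> L \<longleftrightarrow> f K \<subseteq> f L"
    using assms(4) unfolding boolean_ovl_def Ov_def by blast
  have f: "bij_betw f Ov (Pow S)"
    "\<And>K L. K \<in> Ov \<Longrightarrow> L \<in> Ov \<Longrightarrow> K \<subseteq> L \<longleftrightarrow> f K \<subseteq> f L"
    using f0 by simp_all
  have fin: "\<And>K. K \<in> Ov \<Longrightarrow> f K \<subseteq> S" by (metis PowD bij_betw_apply f(1))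
  have surj: "\<exists>M\<in>Ov. f M = T" if "T \<subseteq> S" for T
  proof -
    have "T \<in> f ` Ov" using that f(1) by (simp add: bij_betw_def)
    then show ?thesis by (metis imageE)
  qed
  have finj: "\<And>K L. K \<in> Ov \<Longrightarrow> L \<in> Ov \<Longrightarrow> f K = f L \<Longrightarrow> K = L"
    using f(1) bij_betw_imp_inj_on inj_onD by metis
  have HO: "H \<in> Ov" using assms(3) unfolding Ov_def ovl_def by (simp add: subgroup.subset)
  have fH: "f H = {}"
  proof -
    obtain M where "M \<in> Ov" "f M = {}" using surj by blast
    moreover have "H \<subseteq> M" using \<open>M \<in> Ov\<close> unfolding Ov_def ovl_def by blast
    ultimately show ?thesis using f(2)[OF HO] by blast
  qed
  have fjoin: "\<And>K L. K \<in> Ov \<Longrightarrow> L \<in> Ov \<Longrightarrow> f (sjoin G K L) = f K \<union> f L"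
  proof -
    fix K L assume KL: "K \<in> Ov" "L \<in> Ov"
    note J = sjoin_ovl[OF KL[unfolded Ov_def]]
    obtain M where M: "M \<in> Ov" "f M = f K \<union> f L" using surj fin KL by (metis Un_subset_iff)
    have "K \<subseteq> M" "L \<subseteq> M" using f(2) M KL by auto
    then have "sjoin G K L \<subseteq> M" using J(4) M(1) unfolding Ov_def ovl_def by blast
    then have "f (sjoin G K L) \<subseteq> f M" using f(2) M J(1) unfolding Ov_def by blast
    moreover have "f K \<subseteq> f (sjoin G K L)" "f L \<subseteq> f (sjoin G K L)"
      using f(2) J KL unfolding Ov_def by blast+
    ultimately show "f (sjoin G K L) = f K \<union> f L" using M by blast
  qed
  have meetO: "\<And>K L. K \<in> Ov \<Longrightarrow> L \<in> Ov \<Longrightarrow> K \<inter> L \<in> Ov"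
    unfolding Ov_def ovl_def using subgroups_Inter_pair by blast
  have fmeet: "\<And>K L. K \<in> Ov \<Longrightarrow> L \<in> Ov \<Longrightarrow> f (K \<inter> L) = f K \<inter> f L"
  proof -
    fix K L assume KL: "K \<in> Ov" "L \<in> Ov"
    obtain M where M: "M \<in> Ov" "f M = f K \<inter> f L" using surj fin KL by (metis le_infI1)
    have "M \<subseteq> K" "M \<subseteq> L" using f(2) M KL by auto
    then have "f M \<subseteq> f (K \<inter> L)" using f(2) M meetO KL by (meson le_inf_iff)
    moreover have "f (K \<inter> L) \<subseteq> f K" "f (K \<inter> L) \<subseteq> f L"
      using f(2) meetO KL by (meson inf_le1 inf_le2)+
    ultimately show "f (K \<inter> L) = f K \<inter> f L" using M by blast
  qed
  have AO: "A \<in> Ov" using assms(5) unfolding atom_ovl_def Ov_def by blast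
  have AcO: "Ac \<in> Ov" using assms(6) Ov_def by simp
  have subO: "\<And>K. K \<in> ovl G Ac H \<Longrightarrow> K \<in> Ov"
    using AcO unfolding Ov_def ovl_def by blast
  have key: "\<And>K1 K2. K1 \<in> ovl G Ac H \<Longrightarrow> K2 \<in> ovl G Ac H \<Longrightarrow> K1 \<subseteq> K2 \<Longrightarrow>
      K2 \<inter> sjoin G K1 A = K1"
  proof -
    fix K1 K2 assume k: "K1 \<in> ovl G Ac H" "K2 \<in> ovl G Ac H" "K1 \<subseteq> K2"
    have o: "K1 \<in> Ov" "K2 \<in> Ov" using subO k by auto
    have JO: "sjoin G K1 A \<in> Ov" using sjoin_ovl(1) o AO unfolding Ov_def by blast
    have "K2 \<inter> A = H" using k(2) assms(7) AO unfolding ovl_def Ov_def by blast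
    then have e: "f K2 \<inter> f A = {}" using fmeet[OF o(2) AO] fH by simp
    have "f K1 \<subseteq> f K2" using f(2) o k(3) by blast
    then have "f (K2 \<inter> sjoin G K1 A) = f K1"
      using fmeet[OF o(2) JO] fjoin[OF o(1) AO] e by blast
    then show "K2 \<inter> sjoin G K1 A = K1" using finj meetO[OF o(2) JO] o(1) by blast
  qed
  have part1: "\<And>K1 K2. K1 \<in> ovl G Ac H \<Longrightarrow> K2 \<in> ovl G Ac H \<Longrightarrow> K1 \<subseteq> K2 \<Longrightarrow>
            sindex G (sjoin G K1 A) K1 \<le> sindex G (sjoin G K2 A) K2"
  proof -
    fix K1 K2 assume k: "K1 \<in> ovl G Ac H" "K2 \<in> ovl G Ac H" "K1 \<subseteq> K2"
    have o: "K1 \<in> Ov" "K2 \<in> Ov" using subO k by auto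
    note J1 = sjoin_ovl[OF o(1)[unfolded Ov_def] AO[unfolded Ov_def]]
    note J2 = sjoin_ovl[OF o(2)[unfolded Ov_def] AO[unfolded Ov_def]]
    have "sjoin G K1 A \<subseteq> sjoin G K2 A"
      using J1(4) J2(1,2,3) k(3) unfolding ovl_def by blast
    then show "sindex G (sjoin G K1 A) K1 \<le> sindex G (sjoin G K2 A) K2"
      using index_mono[OF _ _ _ _ _ assms(2), of K1 K2 "sjoin G K1 A" "sjoin G K2 A"]
        o J1(1) J2(1) key[OF k] unfolding Ov_def ovl_def by blast
  qed
  have part2: "\<forall>K1\<in>ovl G (carrier G) A. \<forall>K2\<in>ovl G (carrier G) A. K1 \<subset> K2 \<longrightarrow>
            sindex G K1 (K1 \<inter> Ac) \<le> sindex G K2 (K2 \<inter> Ac)"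
  proof (intro ballI impI)
    fix K1 K2 assume k: "K1 \<in> ovl G (carrier G) A" "K2 \<in> ovl G (carrier G) A" "K1 \<subset> K2"
    have s: "subgroup Ac G" using AcO unfolding Ov_def ovl_def by blast
    show "sindex G K1 (K1 \<inter> Ac) \<le> sindex G K2 (K2 \<inter> Ac)"
      using index_mono[OF _ _ _ _ _ assms(2), of "K1 \<inter> Ac" "K2 \<inter> Ac" K1 K2]
        k s subgroups_Inter_pair unfolding ovl_def by blast
  qed
  have part3: "sindex G (carrier G) Ac = 2 \<longrightarrow> (\<forall>K\<in>ovl G Ac H. sindex G (sjoin G K A) K = 2)"
  proof (intro impI ballI)
    fix K assume i2: "sindex G (carrier G) Ac = 2" and k: "K \<in> ovl G Ac H"
    have AcAc: "Ac \<in> ovl G Ac H" using AcO unfolding Ov_def ovl_def by blast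
    have jAc: "sjoin G Ac A = carrier G" using assms(8) unfolding sjoin_def by (simp add: Un_commute)
    have le: "sindex G (sjoin G K A) K \<le> 2"
      using part1[OF k AcAc] k i2 jAc unfolding ovl_def by auto
    have o: "K \<in> Ov" using subO k by auto
    note J = sjoin_ovl[OF o[unfolded Ov_def] AO[unfolded Ov_def]]
    obtain a where a: "a \<in> A" "a \<notin> K"
    proof -
      have "\<not> A \<subseteq> K"
      proof
        assume "A \<subseteq> K"
        then have "A \<subseteq> H" using k assms(7) unfolding ovl_def by blast
        then show False using assms(5) unfolding atom_ovl_def ovl_def by blast
      qed
      then show ?thesis using that by blast
    qed
    have aJ: "a \<in> sjoin G K A" using a J(3) by blast
    have sK: "subgroup K G" using k unfolding ovl_def by blast
    have ac: "a \<in> carrier G" using aJ J(1) unfolding ovl_def using subgroup.mem_carrier by blast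
    have oJ: "\<one>\<^bsub>G\<^esub> \<in> sjoin G K A" using J(1) unfolding ovl_def using subgroup.one_closed by blast
    have "K #>\<^bsub>G\<^esub> \<one>\<^bsub>G\<^esub> = K" using sK coset_join2 by (simp add: subgroup.one_closed)
    moreover have "K #>\<^bsub>G\<^esub> a \<noteq> K" using rcos_self[OF ac sK] a by blast
    ultimately have "{K #>\<^bsub>G\<^esub> \<one>\<^bsub>G\<^esub>, K #>\<^bsub>G\<^esub> a} \<subseteq> (\<lambda>x. K #>\<^bsub>G\<^esub> x) ` sjoin G K A" "card {K #>\<^bsub>G\<^esub> \<one>\<^bsub>G\<^esub>, K #>\<^bsub>G\<^esub> a} = 2"
      using aJ oJ by auto
    moreover have "finite (sjoin G K A)" using J(1) assms(2) unfolding ovl_def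
      using finite_subset by blast
    ultimately have "2 \<le> sindex G (sjoin G K A) K" unfolding sindex_eq
      by (metis card_mono finite_imageI)
    then show "sindex G (sjoin G K A) K = 2" using le by simp
  qed
  show ?thesis using part1 part2 part3 by blast
qed

end
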